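(* Let $r\geq0$ be an integer and $T\in\overline{\mathrm{Sub}}(X,1)$ with $T\subset B(1,r)$. Let $T_1,T_2\in\mathcal{R}_{r+1}$ with $T_1\cap T_2=T$. Let $(\Delta_1,\tau_1),(\Delta_2,\tau_2)$ be $R_N$-core graphs and $v_i\in V(\Delta_i)$. If there are based occurrences $f_i\colon(T_i,1)\to(\Delta_i,v_i)$ ($i=1,2$), then the connected component $\Gamma$ of $\Delta_1\times_{R_N}\Delta_2$ containing $(v_1,v_2)$ is $R_N$-graph isomorphic to $T$ (via $x\mapsto(f_1(x),f_2(x))$); in particular $\Gamma$ is contractible.
   Context: $N\ge2$, $F_N$ free with free basis $A$, $X$ its Cayley graph (a tree with vertex set $F_N$, unit edge lengths, metric $d_X$), $B(1,r)=\{x\in X:d_X(1,x)\le r\}$, $R_N=F_N\backslash X$ the rose, $q\colon X\to R_N$ the projection. An $R_N$-graph is a graph with a graph morphism $\tau$ to $R_N$ (edges labeled by $A$ and oriented); $R_N$-graph morphisms commute with the maps to $R_N$. An $R_N$-core graph is a finite $R_N$-graph with $\tau$ locally injective and no vertices of degree $0$ or $1$. Subtrees of $X$ are $R_N$-graphs via $q$. $\overline{\mathrm{Sub}}(X,1)$: finite subtrees of $X$ containing $1$ (including $\{1\}$). For $r\ge1$, $\mathcal{R}_r$: finite subtrees $T'\ni1$ in which $1$ has degree $\geq2$ and every degree-one vertex lies at distance exactly $r$ from $1$. A based occurrence $(T',1)\to(\Delta,v)$ of a finite subtree $T'$ is an $R_N$-graph morphism sending $1\mapsto v$ and preserving the degree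 of every vertex of $T'$ of degree $\ge2$. The fiber product $\Delta_1\times_{R_N}\Delta_2$ has vertex set $V(\Delta_1)\times V(\Delta_2)$ and, for each pair of edges $e_1,e_2$ with the same label $a$ (oriented compatibly), an edge labeled $a$ from $(o(e_1),o(e_2))$ to $(t(e_1),t(e_2))$. *)

theory Defs
  imports Main
begin

text \<open>A graph with a morphism to the rose R_N: every edge is oriented and
labelled by a basis element, represented by an index i < N.\<close>

record ('v, 'e) rgraph =
  verts :: "'v set"
  edges :: "'e set"
  src   :: "'e \<Rightarrow> 'v"
  tgt   :: "'e \<Rightarrow> 'v"
  lab   :: "'e \<Rightarrow> nat"

definition wf_rgraph :: "nat \<Rightarrow> ('v, 'e) rgraph \<Rightarrow> bool" where
  "wf_rgraph N G \<longleftrightarrow> (\<forall>e\<in>edges G. src G e \<in> verts G \<and> tgt G e \<in> verts G \<and> lab G e < N)"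

text \<open>Degree: number of half-edges at v (a loop counts twice).\<close>
definition deg :: "('v, 'e) rgraph \<Rightarrow> 'v \<Rightarrow> nat" where
  "deg G v = card {e\<in>edges G. src G e = v} + card {e\<in>edges G. tgt G e = v}"

definition locally_injective :: "('v, 'e) rgraph \<Rightarrow> bool" where
  "locally_injective G \<longleftrightarrow>
     (\<forall>v\<in>verts G. inj_on (lab G) {e\<in>edges G. src G e = v}
                 \<and> inj_on (lab G) {e\<in>edges G. tgt G e = v})"

definition core_graph :: "nat \<Rightarrow> ('v, 'e) rgraph \<Rightarrow> bool" where
  "core_graph N G \<longleftrightarrow> wf_rgraph N G \<and> finite (verts G) \<and> finite (edges G)
     \<and> locally_injective G \<and> (\<forall>v\<in>verts G. deg G v \<ge> 2)"

definition rmorph :: "('v, 'e) rgraph \<Rightarrow> ('w, 'f) rgraph \<Rightarrow> ('v \<Rightarrow> 'w) \<Rightarrow> ('e \<Rightarrow> 'f) \<Rightarrow> bool" where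
  "rmorph G H fv fe \<longleftrightarrow>
     fv ` verts G \<subseteq> verts H \<and> fe ` edges G \<subseteq> edges H \<and>
     (\<forall>e\<in>edges G. src H (fe e) = fv (src G e) \<and> tgt H (fe e) = fv (tgt G e)
                   \<and> lab H (fe e) = lab G e)"

definition riso :: "('v, 'e) rgraph \<Rightarrow> ('w, 'f) rgraph \<Rightarrow> ('v \<Rightarrow> 'w) \<Rightarrow> ('e \<Rightarrow> 'f) \<Rightarrow> bool" where
  "riso G H fv fe \<longleftrightarrow> rmorph G H fv fe \<and> bij_betw fv (verts G) (verts H)
     \<and> bij_betw fe (edges G) (edges H)"

definition adj :: "('v, 'e) rgraph \<Rightarrow> 'v \<Rightarrow> 'v \<Rightarrow> bool" where
  "adj G u v \<longleftrightarrow> (\<exists>e\<in>edges G. (src G e = u \<and> tgt G e = v) \<or> (src G e = v \<and> tgt G e = u))"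

definition reach :: "('v, 'e) rgraph \<Rightarrow> 'v \<Rightarrow> 'v \<Rightarrow> bool" where
  "reach G = (adj G)\<^sup>*\<^sup>*"

definition connected_graph :: "('v, 'e) rgraph \<Rightarrow> bool" where
  "connected_graph G \<longleftrightarrow> verts G \<noteq> {} \<and> (\<forall>u\<in>verts G. \<forall>v\<in>verts G. reach G u v)"

definition component :: "('v, 'e) rgraph \<Rightarrow> 'v \<Rightarrow> ('v, 'e) rgraph" where
  "component G v = G\<lparr> verts := {u\<in>verts G. reach G v u},
                      edges := {e\<in>edges G. reach G v (src G e)} \<rparr>"

text \<open>Contractible finite graph = finite tree: connected with |E| = |V| - 1.\<close>
definition contractible_graph :: "('v, 'e) rgraph \<Rightarrow> bool" where
  "contractible_graph G \<longleftrightarrow> connected_graph G \<and> finite (verts G) \<and> finite (edges G)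
     \<and> card (edges G) + 1 = card (verts G)"

definition fiber_product :: "('v, 'e) rgraph \<Rightarrow> ('w, 'f) rgraph \<Rightarrow> ('v \<times> 'w, 'e \<times> 'f) rgraph" where
  "fiber_product G H = \<lparr> verts = verts G \<times> verts H,
     edges = {(e1, e2). e1 \<in> edges G \<and> e2 \<in> edges H \<and> lab G e1 = lab H e2},
     src = (\<lambda>(e1, e2). (src G e1, src H e2)),
     tgt = (\<lambda>(e1, e2). (tgt G e1, tgt H e2)),
     lab = (\<lambda>(e1, e2). lab G e1) \<rparr>"

text \<open>Letters: (i, True) = a_i, (i, False) = a_i^{-1}, i < N. Elements of F_N
are reduced words; the identity 1 is the empty word.\<close>

type_synonym letter = "nat \<times> bool"
type_synonym word = "letter list"

definition inv_letter :: "letter \<Rightarrow> letter" where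
  "inv_letter x = (fst x, \<not> snd x)"

definition reduced :: "nat \<Rightarrow> word \<Rightarrow> bool" where
  "reduced N w \<longleftrightarrow> (\<forall>x\<in>set w. fst x < N) \<and>
     (\<forall>i. Suc i < length w \<longrightarrow> w ! Suc i \<noteq> inv_letter (w ! i))"

definition mult_letter :: "word \<Rightarrow> letter \<Rightarrow> word" where
  "mult_letter w x = (if w \<noteq> [] \<and> last w = inv_letter x then butlast w else w @ [x])"

text \<open>The subgraph of the Cayley graph X induced on a vertex set S; edges are
g --a_i--> g a_i.\<close>
definition cayley_sub :: "nat \<Rightarrow> word set \<Rightarrow> (word, word \<times> nat) rgraph" where
  "cayley_sub N S = \<lparr> verts = S,
     edges = {(w, i). w \<in> S \<and> i < N \<and> mult_letter w (i, True) \<in> S},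
     src = fst,
     tgt = (\<lambda>(w, i). mult_letter w (i, True)),
     lab = snd \<rparr>"

definition cayley_tree :: "nat \<Rightarrow> (word, word \<times> nat) rgraph" where
  "cayley_tree N = cayley_sub N {w. reduced N w}"

text \<open>Sub-bar(X,1): finite subtrees of X containing 1 (identified with their
vertex sets; a connected subgraph of a tree is the induced one).\<close>
definition SubX1 :: "nat \<Rightarrow> word set \<Rightarrow> bool" where
  "SubX1 N T \<longleftrightarrow> finite T \<and> [] \<in> T \<and> T \<subseteq> {w. reduced N w}
     \<and> connected_graph (cayley_sub N T)"

text \<open>Ball B(1,r); d_X(1,w) = length of the reduced word w.\<close>
definition ball :: "nat \<Rightarrow> nat \<Rightarrow> word set" where
  "ball N r = {w. reduced N w \<and> length w \<le> r}"

definition calR :: "nat \<Rightarrow> nat \<Rightarrow> word set \<Rightarrow> bool" where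
  "calR N r T \<longleftrightarrow> SubX1 N T \<and> deg (cayley_sub N T) [] \<ge> 2
     \<and> (\<forall>w\<in>T. deg (cayley_sub N T) w = 1 \<longrightarrow> length w = r)"

definition based_occurrence ::
  "nat \<Rightarrow> word set \<Rightarrow> ('v, 'e) rgraph \<Rightarrow> 'v \<Rightarrow> (word \<Rightarrow> 'v) \<Rightarrow> (word \<times> nat \<Rightarrow> 'e) \<Rightarrow> bool" where
  "based_occurrence N T D v fv fe \<longleftrightarrow>
     rmorph (cayley_sub N T) D fv fe \<and> fv [] = v \<and>
     (\<forall>x\<in>T. deg (cayley_sub N T) x \<ge> 2 \<longrightarrow> deg D (fv x) = deg (cayley_sub N T) x)"

end

theory Submission
  imports Defs
begin

lemma reduced_snoc2: "reduced N (xs @ [a, b]) \<Longrightarrow> b \<noteq> inv_letter a"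
  unfolding reduced_def
  by (auto dest!: spec[of _ "length xs"] simp: nth_append)

lemma reduced_butlast_last:
  assumes "reduced N y" "y \<noteq> []" "last y = inv_letter c" "butlast y = y' @ [c]"
  shows False
proof -
  have "y = butlast y @ [last y]" using assms(2) by simp
  hence "y = y' @ [c, inv_letter c]" using assms by simp
  thus False using reduced_snoc2[of N y' c "inv_letter c"] assms(1) by simp
qed

lemma mult_inj:
  assumes "reduced N y" "reduced N y'" "mult_letter y c = mult_letter y' c"
  shows "y = y'"
proof (cases "y \<noteq> [] \<and> last y = inv_letter c")
  case True
  show ?thesis
  proof (cases "y' \<noteq> [] \<and> last y' = inv_letter c")
    case True2: True
    with True assms(3) have "butlast y = butlast y'" by (simp add: mult_letter_def)
    with True True2 show ?thesis by (metis append_butlast_last_id)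
  next
    case False
    with True assms(3) have "butlast y = y' @ [c]" by (simp add: mult_letter_def)
    with True reduced_butlast_last[OF assms(1)] show ?thesis by blast
  qed
next
  case False
  show ?thesis
  proof (cases "y' \<noteq> [] \<and> last y' = inv_letter c")
    case True2: True
    with False assms(3) have "butlast y' = y @ [c]" by (auto simp add: mult_letter_def split: if_splits)
    with True2 reduced_butlast_last[OF assms(2)] show ?thesis by blast
  next
    case False2: False
    with False assms(3) show ?thesis by (auto simp add: mult_letter_def split: if_splits)
  qed
qed

lemma reach_morph:
  assumes "rmorph G H fv fe" "reach G a b"
  shows "reach H (fv a) (fv b)"
proof -
  have "(adj G)\<^sup>*\<^sup>* a b" using assms(2) by (simp add: reach_def)
  thus ?thesis
  proof (induction rule: rtranclp_induct)
    case base thus ?case by (simp add: reach_def)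
  next
    case (step y z)
    have "adj H (fv y) (fv z)"
      using step(2) assms(1) unfolding adj_def rmorph_def by (auto 4 4 intro!: bexI)
    with step(3) show ?case by (simp add: reach_def)
  qed
qed

lemma prefix_closed:
  assumes "SubX1 N T" "x \<in> T"
  shows "\<forall>k. take k x \<in> T"
proof -
  have "reach (cayley_sub N T) [] x" using assms unfolding SubX1_def connected_graph_def
    by (auto simp: cayley_sub_def)
  hence "(adj (cayley_sub N T))\<^sup>*\<^sup>* [] x" by (simp add: reach_def)
  thus ?thesis
  proof (induction rule: rtranclp_induct)
    case base thus ?case using assms(1) by (simp add: SubX1_def)
  next
    case (step a b)
    have key: "\<And>a b. \<forall>k. take k a \<in> T \<Longrightarrow> b \<in> T \<Longrightarrow>
       (\<exists>m. b = take m a) \<or> (\<exists>c. b = a @ [c]) \<Longrightarrow> \<forall>k. take k b \<in> T"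
    proof -
      fix a b assume h: "\<forall>k. take k a \<in> T" "b \<in> T" "(\<exists>m. b = take m a) \<or> (\<exists>c. b = a @ [c])"
      show "\<forall>k. take k b \<in> T"
      proof
        fix k
        from h(3) show "take k b \<in> T"
        proof
          assume "\<exists>m. b = take m a" then obtain m where "b = take m a" by blast
          thus ?thesis using h(1) by (simp add: min_def)
        next
          assume "\<exists>c. b = a @ [c]" then obtain c where c: "b = a @ [c]" by blast
          show ?thesis
          proof (cases "k \<le> length a")
            case True thus ?thesis using h(1) c by simp
          next
            case False
            hence "take k b = b" using c by simp
            thus ?thesis using h(2) by simp
          qed
        qed
      qed
    qed
    from step(2) obtain i w where e: "(w, i) \<in> edges (cayley_sub N T)"
      "(w = a \<and> mult_letter w (i, True) = b) \<or> (w = b \<and> mult_letter w (i, True) = a)"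
      unfolding adj_def by (auto simp: cayley_sub_def)
    have bT: "b \<in> T" using e by (auto simp: cayley_sub_def)
    from e(2) show ?case
    proof
      assume h: "w = a \<and> mult_letter w (i, True) = b"
      hence "(\<exists>m. b = take m a) \<or> (\<exists>c. b = a @ [c])"
        by (auto simp: mult_letter_def butlast_conv_take split: if_splits)
      thus ?thesis using key step(3) bT by blast
    next
      assume h: "w = b \<and> mult_letter w (i, True) = a"
      show ?thesis
      proof (cases "b \<noteq> [] \<and> last b = inv_letter (i, True)")
        case True
        hence "b = a @ [last b]" using h by (metis append_butlast_last_id mult_letter_def)
        thus ?thesis using key step(3) bT by blast
      next
        case False
        hence "a = b @ [(i,True)]" using h by (auto simp: mult_letter_def)
        hence "b = take (length b) a" by simp
        thus ?thesis using key step(3) bT by blast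
      qed
    qed
  qed
qed

lemma mult_butlast_True:
  assumes "reduced N x" "x \<noteq> []" "last x = (i, True)"
  shows "mult_letter (butlast x) (i, True) = x"
proof (cases "butlast x \<noteq> [] \<and> last (butlast x) = inv_letter (i, True)")
  case True
  hence "butlast x = butlast (butlast x) @ [(i, False)]"
    using append_butlast_last_id[of "butlast x"] by (simp add: inv_letter_def)
  moreover have "last x = inv_letter (i, False)" using assms(3) by (simp add: inv_letter_def)
  ultimately have False using reduced_butlast_last[OF assms(1,2), of "(i, False)"] by simp
  thus ?thesis ..
next
  case False
  thus ?thesis using assms append_butlast_last_id[of x] by (auto simp add: mult_letter_def)
qed

lemma tree_count:
  assumes "SubX1 N T"
  shows "card (edges (cayley_sub N T)) + 1 = card T"
proof -
  define pe where "pe x = (if snd (last x) then (butlast x, fst (last x)) else (x, fst (last x)))"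
    for x :: word
  have fin: "finite T" and nil: "[] \<in> T" and red: "T \<subseteq> {w. reduced N w}"
    using assms by (auto simp: SubX1_def)
  have bl: "butlast x \<in> T" if "x \<in> T" for x
    using prefix_closed[OF assms that] by (simp add: butlast_conv_take)
  have ltN: "fst (last x) < N" if "x \<in> T" "x \<noteq> []" for x
    using red that unfolding reduced_def by auto
  have bij: "bij_betw pe (T - {[]}) (edges (cayley_sub N T))"
    unfolding bij_betw_def
  proof (intro conjI)
    show "inj_on pe (T - {[]})"
    proof (rule inj_onI)
      fix x y assume x: "x \<in> T - {[]}" and y: "y \<in> T - {[]}" and eq: "pe x = pe y"
      have rx: "reduced N x" and ry: "reduced N y" using x y red by auto
      obtain i b where lx: "last x = (i, b)" by (cases "last x")
      obtain j c where ly: "last y = (j, c)" by (cases "last y")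
      have xe: "x = butlast x @ [(i, b)]" using x lx by (metis DiffD2 append_butlast_last_id singletonI)
      have ye: "y = butlast y @ [(j, c)]" using y ly by (metis DiffD2 append_butlast_last_id singletonI)
      have bad: "\<And>z k. \<not> reduced N (z @ [(k, False), (k, True)])"
        using reduced_snoc2 by (fastforce simp: inv_letter_def)
      show "x = y"
      proof (cases b)
        case True
        show ?thesis
        proof (cases c)
          case True2: True
          with True eq lx ly have "butlast x = butlast y" "i = j" by (auto simp: pe_def)
          thus ?thesis using xe ye True True2 by simp
        next
          case False
          with True eq lx ly have e: "butlast x = y" "i = j" by (auto simp: pe_def)
          have "x = butlast y @ [(i, False), (i, True)]"
            using xe ye e True False by (metis append.assoc append_Cons append_Nil)
          thus ?thesis using bad rx by metis
        qed
      next
        case False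
        show ?thesis
        proof (cases c)
          case True2: True
          with False eq lx ly have e: "butlast y = x" "i = j" by (auto simp: pe_def)
          have "y = butlast x @ [(i, False), (i, True)]"
            using xe ye e True2 False by (metis append.assoc append_Cons append_Nil)
          thus ?thesis using bad ry by metis
        next
          case False2: False
          with False eq lx ly show ?thesis by (auto simp: pe_def)
        qed
      qed
    qed
  next
    show "pe ` (T - {[]}) = edges (cayley_sub N T)"
    proof
      show "pe ` (T - {[]}) \<subseteq> edges (cayley_sub N T)"
      proof
        fix e assume "e \<in> pe ` (T - {[]})"
        then obtain x where x: "x \<in> T" "x \<noteq> []" and e: "e = pe x" by auto
        obtain i b where lx: "last x = (i, b)" by (cases "last x")
        have iN: "i < N" using ltN[OF x] lx by simp
        show "e \<in> edges (cayley_sub N T)"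
        proof (cases b)
          case True
          have "mult_letter (butlast x) (i, True) = x"
            using mult_butlast_True[of N x i] red x lx True by auto
          thus ?thesis using e lx True x bl iN by (auto simp: pe_def cayley_sub_def)
        next
          case False
          have "mult_letter x (i, True) = butlast x" using x lx False
            by (simp add: mult_letter_def inv_letter_def)
          thus ?thesis using e lx False x bl iN by (auto simp: pe_def cayley_sub_def)
        qed
      qed
    next
      show "edges (cayley_sub N T) \<subseteq> pe ` (T - {[]})"
      proof
        fix e assume "e \<in> edges (cayley_sub N T)"
        then obtain w i where e: "e = (w, i)" "w \<in> T" "i < N" "mult_letter w (i, True) \<in> T"
          by (auto simp: cayley_sub_def)
        show "e \<in> pe ` (T - {[]})"
        proof (cases "w \<noteq> [] \<and> last w = inv_letter (i, True)")
          case True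
          hence "pe w = (w, i)" by (simp add: pe_def inv_letter_def)
          thus ?thesis using e True by (intro image_eqI[of _ _ w]) auto
        next
          case False
          hence m: "mult_letter w (i, True) = w @ [(i, True)]" unfolding mult_letter_def by argo
          hence "pe (w @ [(i, True)]) = (w, i)" by (simp add: pe_def)
          thus ?thesis using e m by (intro image_eqI[of _ _ "w @ [(i, True)]"]) auto
        qed
      qed
    qed
  qed
  hence "card (T - {[]}) = card (edges (cayley_sub N T))" by (rule bij_betw_same_card)
  moreover have "card (T - {[]}) + 1 = card T" using fin nil
    using card_gt_0_iff[of T] by (auto simp: card_Diff_singleton)
  ultimately show ?thesis by simp
qed


lemma cs_verts[simp]: "verts (cayley_sub N S) = S" by (simp add: cayley_sub_def)
lemma cs_edges: "t \<in> edges (cayley_sub N S) \<longleftrightarrow> fst t \<in> S \<and> snd t < N \<and> mult_letter (fst t) (snd t, True) \<in> S"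
  by (cases t) (simp add: cayley_sub_def)
lemma cs_src[simp]: "src (cayley_sub N S) = fst" by (simp add: cayley_sub_def)
lemma cs_tgt[simp]: "tgt (cayley_sub N S) t = mult_letter (fst t) (snd t, True)"
  by (simp add: cayley_sub_def split_beta)
lemma cs_lab[simp]: "lab (cayley_sub N S) = snd" by (simp add: cayley_sub_def)

lemma fp_verts[simp]: "verts (fiber_product G H) = verts G \<times> verts H" by (simp add: fiber_product_def)
lemma fp_edges: "e \<in> edges (fiber_product G H) \<longleftrightarrow> fst e \<in> edges G \<and> snd e \<in> edges H \<and> lab G (fst e) = lab H (snd e)"
  by (cases e) (simp add: fiber_product_def)
lemma fp_src[simp]: "src (fiber_product G H) e = (src G (fst e), src H (snd e))"
  by (simp add: fiber_product_def split_beta)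
lemma fp_tgt[simp]: "tgt (fiber_product G H) e = (tgt G (fst e), tgt H (snd e))"
  by (simp add: fiber_product_def split_beta)
lemma fp_lab[simp]: "lab (fiber_product G H) e = lab G (fst e)"
  by (simp add: fiber_product_def split_beta)

lemma comp_verts[simp]: "verts (component G v) = {u\<in>verts G. reach G v u}" by (simp add: component_def)
lemma comp_edges[simp]: "edges (component G v) = {e\<in>edges G. reach G v (src G e)}" by (simp add: component_def)
lemma comp_src[simp]: "src (component G v) = src G" by (simp add: component_def)
lemma comp_tgt[simp]: "tgt (component G v) = tgt G" by (simp add: component_def)
lemma comp_lab[simp]: "lab (component G v) = lab G" by (simp add: component_def)

lemma finite_cs_edges: "finite S \<Longrightarrow> finite (edges (cayley_sub N S))"
  by (rule finite_subset[of _ "S \<times> {..<N}"]) (auto simp: cs_edges)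

lemma reach_sym: "reach G a b \<Longrightarrow> reach G b a"
proof -
  assume "reach G a b"
  hence "(adj G)\<^sup>*\<^sup>* a b" by (simp add: reach_def)
  thus ?thesis
  proof (induction rule: rtranclp_induct)
    case base thus ?case by (simp add: reach_def)
  next
    case (step y z)
    have "adj G z y" using step(2) unfolding adj_def by blast
    hence "(adj G)\<^sup>*\<^sup>* z a" using step(3) unfolding reach_def
      by (meson converse_rtranclp_into_rtranclp)
    thus ?case by (simp add: reach_def)
  qed
qed

lemma reach_trans: "reach G a b \<Longrightarrow> reach G b c \<Longrightarrow> reach G a c"
  unfolding reach_def by (rule rtranclp_trans)

definition outE :: "('v, 'e) rgraph \<Rightarrow> 'v \<Rightarrow> 'e set" where
  "outE G v = {e\<in>edges G. src G e = v}"
definition inE :: "('v, 'e) rgraph \<Rightarrow> 'v \<Rightarrow> 'e set" where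
  "inE G v = {e\<in>edges G. tgt G e = v}"

lemma calR_deg:
  assumes "calR N (r + 1) S" "x \<in> S" "length x \<le> r"
  shows "deg (cayley_sub N S) x \<ge> 2"
proof (cases "x = []")
  case True thus ?thesis using assms(1) by (simp add: calR_def)
next
  case False
  have sub: "SubX1 N S" using assms(1) by (simp add: calR_def)
  have fin: "finite (edges (cayley_sub N S))" using sub finite_cs_edges by (auto simp: SubX1_def)
  have "reach (cayley_sub N S) [] x" using sub assms(2) unfolding SubX1_def connected_graph_def by auto
  hence "(adj (cayley_sub N S))\<^sup>*\<^sup>* [] x" by (simp add: reach_def)
  then obtain z where "adj (cayley_sub N S) z x" using False by (metis rtranclp.cases)
  then obtain e where e: "e \<in> edges (cayley_sub N S)"
    "src (cayley_sub N S) e = x \<or> tgt (cayley_sub N S) e = x" unfolding adj_def by blast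
  have "deg (cayley_sub N S) x \<noteq> 0"
  proof
    assume "deg (cayley_sub N S) x = 0"
    hence "card {e\<in>edges (cayley_sub N S). src (cayley_sub N S) e = x} = 0"
      "card {e\<in>edges (cayley_sub N S). tgt (cayley_sub N S) e = x} = 0" by (auto simp: deg_def)
    hence "{e\<in>edges (cayley_sub N S). src (cayley_sub N S) e = x} = {}"
      "{e\<in>edges (cayley_sub N S). tgt (cayley_sub N S) e = x} = {}" using fin by auto
    thus False using e by blast
  qed
  moreover have "deg (cayley_sub N S) x \<noteq> 1" using assms(1,2,3) by (auto simp: calR_def)
  ultimately show ?thesis by linarith
qed

lemma star:
  assumes core: "core_graph N D" and occ: "based_occurrence N S D v f g"
    and red: "S \<subseteq> {w. reduced N w}" and fin: "finite S" and x: "x \<in> S"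
    and d: "deg (cayley_sub N S) x \<ge> 2"
  shows "outE D (f x) = g ` outE (cayley_sub N S) x \<and> inE D (f x) = g ` inE (cayley_sub N S) x"
proof -
  let ?C = "cayley_sub N S"
  have mor: "rmorph ?C D f g" using occ by (simp add: based_occurrence_def)
  have sub1: "g ` outE ?C x \<subseteq> outE D (f x)" using mor unfolding rmorph_def outE_def by auto
  have sub2: "g ` inE ?C x \<subseteq> inE D (f x)" using mor unfolding rmorph_def inE_def by auto
  have labg: "lab D (g t) = snd t" if "t \<in> edges ?C" for t using mor that by (simp add: rmorph_def)
  have inj1: "inj_on g (outE ?C x)"
  proof (rule inj_onI)
    fix t t' assume "t \<in> outE ?C x" "t' \<in> outE ?C x" "g t = g t'"
    thus "t = t'" using labg[of t] labg[of t'] by (auto simp: outE_def prod_eq_iff)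
  qed
  have inj2: "inj_on g (inE ?C x)"
  proof (rule inj_onI)
    fix t t' assume h: "t \<in> inE ?C x" "t' \<in> inE ?C x" "g t = g t'"
    hence sn: "snd t = snd t'" using labg[of t] labg[of t'] by (auto simp: inE_def)
    have "fst t \<in> S" "fst t' \<in> S" using h by (auto simp: inE_def cs_edges)
    hence "reduced N (fst t)" "reduced N (fst t')" using red by auto
    moreover have "mult_letter (fst t) (snd t, True) = mult_letter (fst t') (snd t, True)"
      using h sn by (auto simp: inE_def)
    ultimately have "fst t = fst t'" by (rule mult_inj)
    thus "t = t'" using sn by (simp add: prod_eq_iff)
  qed
  have finD: "finite (edges D)" using core by (simp add: core_graph_def)
  have finO: "finite (outE D (f x))" "finite (inE D (f x))" using finD by (auto simp: outE_def inE_def)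
  have finC: "finite (edges ?C)" using fin by (rule finite_cs_edges)
  have "deg D (f x) = deg ?C x" using occ x d by (auto simp: based_occurrence_def)
  hence degeq: "card (outE D (f x)) + card (inE D (f x)) = card (outE ?C x) + card (inE ?C x)"
    by (simp add: deg_def outE_def inE_def)
  have c1: "card (outE ?C x) \<le> card (outE D (f x))"
    using card_mono[OF finO(1) sub1] card_image[OF inj1] by simp
  have c2: "card (inE ?C x) \<le> card (inE D (f x))"
    using card_mono[OF finO(2) sub2] card_image[OF inj2] by simp
  have "card (g ` outE ?C x) = card (outE D (f x))" using c1 c2 degeq card_image[OF inj1] by simp
  hence e1: "g ` outE ?C x = outE D (f x)" using card_subset_eq[OF finO(1) sub1] by simp
  have "card (g ` inE ?C x) = card (inE D (f x))" using c1 c2 degeq card_image[OF inj2] by simp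
  hence e2: "g ` inE ?C x = inE D (f x)" using card_subset_eq[OF finO(2) sub2] by simp
  show ?thesis using e1 e2 by simp
qed

lemma card_fibers_const:
  assumes "finite S" "\<And>x. x \<in> S \<Longrightarrow> card {y\<in>S. g y = g x} = k"
  shows "card S = k * card (g ` S)"
proof -
  have "card S = sum (\<lambda>_. 1) S" by simp
  also have "\<dots> = (\<Sum>u\<in>g ` S. sum (\<lambda>_. 1::nat) {x. x \<in> S \<and> g x = u})"
    using sum.group[OF assms(1) finite_imageI[OF assms(1)], where g=g and h="\<lambda>_. 1::nat"] by simp
  also have "\<dots> = (\<Sum>u\<in>g ` S. k)"
  proof (rule sum.cong)
    fix u assume "u \<in> g ` S"
    then obtain x where "x \<in> S" "u = g x" by auto
    thus "sum (\<lambda>_. 1::nat) {x. x \<in> S \<and> g x = u} = k" using assms(2)[of x] by simp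
  qed simp
  finally show ?thesis by simp
qed

lemma arith_k: "(k::nat) * a = k * b + 1 \<Longrightarrow> k = 1 \<and> a = b + 1"
proof -
  assume h: "k * a = k * b + 1"
  hence "k * (a - b) = 1" by (simp add: diff_mult_distrib2)
  hence "k = 1" "a - b = 1" by simp_all
  thus ?thesis using h by simp
qed


theorem mainTheorem11:
  fixes N r :: nat and T T1 T2 :: "word set"
    and D1 :: "('v1, 'e1) rgraph" and D2 :: "('v2, 'e2) rgraph"
    and v1 :: 'v1 and v2 :: 'v2
    and f1 :: "word \<Rightarrow> 'v1" and g1 :: "word \<times> nat \<Rightarrow> 'e1"
    and f2 :: "word \<Rightarrow> 'v2" and g2 :: "word \<times> nat \<Rightarrow> 'e2"
  assumes "N \<ge> 2"
    and "SubX1 N T" and "T \<subseteq> ball N r"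
    and "calR N (r + 1) T1" and "calR N (r + 1) T2" and "T1 \<inter> T2 = T"
    and "core_graph N D1" and "core_graph N D2"
    and "v1 \<in> verts D1" and "v2 \<in> verts D2"
    and "based_occurrence N T1 D1 v1 f1 g1"
    and "based_occurrence N T2 D2 v2 f2 g2"
  shows "riso (cayley_sub N T) (component (fiber_product D1 D2) (v1, v2))
              (\<lambda>x. (f1 x, f2 x)) (\<lambda>e. (g1 e, g2 e))
         \<and> contractible_graph (component (fiber_product D1 D2) (v1, v2))"
proof -
  note A = assms
  define C1 where "C1 = cayley_sub N T1"
  define C2 where "C2 = cayley_sub N T2"
  define CT where "CT = cayley_sub N T"
  define P where "P = fiber_product D1 D2"
  define Gam where "Gam = component P (v1, v2)"
  define F where "F = (\<lambda>x. (f1 x, f2 x))"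
  define G where "G = (\<lambda>e. (g1 e, g2 e))"
  have sub1: "SubX1 N T1" and sub2: "SubX1 N T2" using A(4,5) by (auto simp: calR_def)
  have fin1: "finite T1" and red1: "T1 \<subseteq> {w. reduced N w}" using sub1 by (auto simp: SubX1_def)
  have fin2: "finite T2" and red2: "T2 \<subseteq> {w. reduced N w}" using sub2 by (auto simp: SubX1_def)
  have finT: "finite T" and nilT: "[] \<in> T" using A(2) by (auto simp: SubX1_def)
  have TT1: "T \<subseteq> T1" and TT2: "T \<subseteq> T2" using A(6) by auto
  have redT: "T \<subseteq> {w. reduced N w}" using TT1 red1 by auto
  have lenT: "length x \<le> r" if "x \<in> T" for x using A(3) that by (auto simp: ball_def)
  have mor1: "rmorph C1 D1 f1 g1" using A(11) by (simp add: based_occurrence_def C1_def)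
  have mor2: "rmorph C2 D2 f2 g2" using A(12) by (simp add: based_occurrence_def C2_def)
  have st1: "outE D1 (f1 x) = g1 ` outE C1 x \<and> inE D1 (f1 x) = g1 ` inE C1 x" if "x \<in> T" for x
    unfolding C1_def
    using star[OF A(7) A(11) red1 fin1] calR_deg[OF A(4)] that TT1 lenT by blast
  have st2: "outE D2 (f2 x) = g2 ` outE C2 x \<and> inE D2 (f2 x) = g2 ` inE C2 x" if "x \<in> T" for x
    unfolding C2_def
    using star[OF A(8) A(12) red2 fin2] calR_deg[OF A(5)] that TT2 lenT by blast
  have ECT: "edges CT = edges C1 \<inter> edges C2"
    using A(6) by (auto simp: CT_def C1_def C2_def cs_edges)
  have morP: "rmorph CT P F G"
    using mor1 mor2 ECT TT1 TT2 unfolding rmorph_def CT_def P_def F_def G_def C1_def C2_def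
    by (auto simp: fp_edges image_subset_iff subset_iff)
  have labP: "lab P (G t) = snd t" if "t \<in> edges CT" for t
    using morP that unfolding rmorph_def CT_def by simp
  have srcP: "src P (G t) = F (fst t)" if "t \<in> edges CT" for t
    using morP that unfolding rmorph_def CT_def by simp
  have tgtP: "tgt P (G t) = F (tgt CT t)" if "t \<in> edges CT" for t
    using morP that unfolding rmorph_def by simp
  have GP: "G t \<in> edges P" if "t \<in> edges CT" for t
    using morP that unfolding rmorph_def by auto
  have FP: "F x \<in> verts P" if "x \<in> T" for x
    using morP that unfolding rmorph_def CT_def by auto
  have outP: "outE P (F x) = G ` outE CT x" if x: "x \<in> T" for x
  proof
    show "G ` outE CT x \<subseteq> outE P (F x)" using GP srcP by (auto simp: outE_def CT_def)
  next
    show "outE P (F x) \<subseteq> G ` outE CT x"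
    proof
      fix e assume e: "e \<in> outE P (F x)"
      hence e1: "fst e \<in> outE D1 (f1 x)" and e2: "snd e \<in> outE D2 (f2 x)"
        and le: "lab D1 (fst e) = lab D2 (snd e)"
        by (auto simp: outE_def P_def fp_edges F_def)
      obtain t1 where t1: "t1 \<in> outE C1 x" "fst e = g1 t1" using e1 st1[OF x] by auto
      obtain t2 where t2: "t2 \<in> outE C2 x" "snd e = g2 t2" using e2 st2[OF x] by auto
      have "lab D1 (g1 t1) = snd t1" using mor1 t1 by (auto simp: rmorph_def outE_def C1_def)
      moreover have "lab D2 (g2 t2) = snd t2" using mor2 t2 by (auto simp: rmorph_def outE_def C2_def)
      ultimately have "snd t1 = snd t2" using le t1 t2 by simp
      moreover have "fst t1 = x" "fst t2 = x" using t1 t2 by (auto simp: outE_def C1_def C2_def)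
      ultimately have eq: "t1 = t2" by (simp add: prod_eq_iff)
      hence "t1 \<in> edges CT" using ECT t1 t2 by (auto simp: outE_def)
      hence "t1 \<in> outE CT x" using t1 by (auto simp: outE_def CT_def C1_def)
      moreover have "e = G t1" using t1(2) t2(2) eq unfolding G_def by (metis prod.collapse)
      ultimately show "e \<in> G ` outE CT x" by blast
    qed
  qed
  have inP: "inE P (F x) = G ` inE CT x" if x: "x \<in> T" for x
  proof
    show "G ` inE CT x \<subseteq> inE P (F x)" using GP tgtP by (auto simp: inE_def)
  next
    show "inE P (F x) \<subseteq> G ` inE CT x"
    proof
      fix e assume e: "e \<in> inE P (F x)"
      hence e1: "fst e \<in> inE D1 (f1 x)" and e2: "snd e \<in> inE D2 (f2 x)"
        and le: "lab D1 (fst e) = lab D2 (snd e)"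
        by (auto simp: inE_def P_def fp_edges F_def)
      obtain t1 where t1: "t1 \<in> inE C1 x" "fst e = g1 t1" using e1 st1[OF x] by auto
      obtain t2 where t2: "t2 \<in> inE C2 x" "snd e = g2 t2" using e2 st2[OF x] by auto
      have "lab D1 (g1 t1) = snd t1" using mor1 t1 by (auto simp: rmorph_def inE_def C1_def)
      moreover have "lab D2 (g2 t2) = snd t2" using mor2 t2 by (auto simp: rmorph_def inE_def C2_def)
      ultimately have sn: "snd t1 = snd t2" using le t1 t2 by simp
      have m: "mult_letter (fst t1) (snd t1, True) = mult_letter (fst t2) (snd t1, True)"
        using t1 t2 sn by (auto simp: inE_def C1_def C2_def)
      have "reduced N (fst t1)" "reduced N (fst t2)" using t1 t2 red1 red2
        by (auto simp: inE_def C1_def C2_def cs_edges)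
      hence "fst t1 = fst t2" using m mult_inj by blast
      hence eq: "t1 = t2" using sn by (simp add: prod_eq_iff)
      hence "t1 \<in> edges CT" using ECT t1 t2 by (auto simp: inE_def)
      hence "t1 \<in> inE CT x" using t1 by (auto simp: inE_def CT_def C1_def)
      moreover have "e = G t1" using t1(2) t2(2) eq unfolding G_def by (metis prod.collapse)
      ultimately show "e \<in> G ` inE CT x" by blast
    qed
  qed
  have F0: "F [] = (v1, v2)" using A(11,12) by (simp add: based_occurrence_def F_def)
  have reachT: "reach CT [] x" if "x \<in> T" for x
    using A(2) that nilT unfolding SubX1_def connected_graph_def CT_def by auto
  have tgtT: "tgt CT t \<in> T" if "t \<in> edges CT" for t using that by (simp add: CT_def cs_edges)
  have srcT: "fst t \<in> T" if "t \<in> edges CT" for t using that by (simp add: CT_def cs_edges)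
  have closure: "u \<in> F ` T" if "reach P (v1, v2) u" for u
  proof -
    have "(adj P)\<^sup>*\<^sup>* (v1, v2) u" using that by (simp add: reach_def)
    thus ?thesis
    proof (induction rule: rtranclp_induct)
      case base thus ?case using F0 nilT by force
    next
      case (step y z)
      then obtain x where x: "x \<in> T" "y = F x" by auto
      from step(2) obtain e where e: "e \<in> edges P"
        "(src P e = y \<and> tgt P e = z) \<or> (src P e = z \<and> tgt P e = y)" unfolding adj_def by blast
      from e(2) show ?case
      proof
        assume h: "src P e = y \<and> tgt P e = z"
        hence "e \<in> outE P (F x)" using e x by (simp add: outE_def)
        then obtain t where t: "t \<in> outE CT x" "e = G t" using outP[OF x(1)] by auto
        hence "t \<in> edges CT" by (simp add: outE_def)
        thus ?thesis using h t tgtP tgtT by (metis image_eqI)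
      next
        assume h: "src P e = z \<and> tgt P e = y"
        hence "e \<in> inE P (F x)" using e x by (simp add: inE_def)
        then obtain t where t: "t \<in> inE CT x" "e = G t" using inP[OF x(1)] by auto
        hence "t \<in> edges CT" by (simp add: inE_def)
        thus ?thesis using h t srcP srcT by (metis image_eqI)
      qed
    qed
  qed
  have VG: "verts Gam = F ` T"
  proof
    show "verts Gam \<subseteq> F ` T" using closure by (auto simp: Gam_def)
  next
    show "F ` T \<subseteq> verts Gam"
    proof
      fix u assume "u \<in> F ` T"
      then obtain x where x: "x \<in> T" "u = F x" by auto
      have "reach P (F []) (F x)" using reach_morph[OF morP reachT[OF x(1)]] .
      thus "u \<in> verts Gam" using x FP F0 by (simp add: Gam_def)
    qed
  qed
  have EG: "edges Gam = G ` edges CT"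
  proof
    show "edges Gam \<subseteq> G ` edges CT"
    proof
      fix e assume "e \<in> edges Gam"
      hence e: "e \<in> edges P" "reach P (v1, v2) (src P e)" by (auto simp: Gam_def)
      then obtain x where x: "x \<in> T" "src P e = F x" using closure by blast
      hence "e \<in> outE P (F x)" using e by (simp add: outE_def)
      thus "e \<in> G ` edges CT" using outP[OF x(1)] by (auto simp: outE_def)
    qed
  next
    show "G ` edges CT \<subseteq> edges Gam"
    proof
      fix e assume "e \<in> G ` edges CT"
      then obtain t where t: "t \<in> edges CT" "e = G t" by auto
      have "reach P (F []) (F (fst t))" using reach_morph[OF morP reachT[OF srcT[OF t(1)]]] .
      thus "e \<in> edges Gam" using t GP srcP F0 by (simp add: Gam_def)
    qed
  qed
  define fib where "fib u = {x\<in>T. F x = u}" for u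
  define efib where "efib e = {t\<in>edges CT. G t = e}" for e
  have cfs: "card (efib (G t0)) = card (fib (F (fst t0)))" if t0: "t0 \<in> edges CT" for t0
  proof (rule bij_betw_same_card[of fst])
    show "bij_betw fst (efib (G t0)) (fib (F (fst t0)))"
      unfolding bij_betw_def
    proof (intro conjI)
      show "inj_on fst (efib (G t0))"
      proof (rule inj_onI)
        fix t t' assume h: "t \<in> efib (G t0)" "t' \<in> efib (G t0)" "fst t = fst t'"
        hence "snd t = snd t'" using labP by (metis (mono_tags, lifting) efib_def mem_Collect_eq)
        thus "t = t'" using h by (simp add: prod_eq_iff)
      qed
      show "fst ` efib (G t0) = fib (F (fst t0))"
      proof
        show "fst ` efib (G t0) \<subseteq> fib (F (fst t0))"
          using srcP srcT t0 by (auto simp: efib_def fib_def) (metis srcP)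
      next
        show "fib (F (fst t0)) \<subseteq> fst ` efib (G t0)"
        proof
          fix x assume "x \<in> fib (F (fst t0))"
          hence x: "x \<in> T" "F x = F (fst t0)" by (auto simp: fib_def)
          have "G t0 \<in> outE P (F x)" using t0 x GP srcP by (simp add: outE_def)
          then obtain t where "t \<in> outE CT x" "G t = G t0" using outP[OF x(1)] by auto
          thus "x \<in> fst ` efib (G t0)" by (auto simp: outE_def efib_def CT_def)
        qed
      qed
    qed
  qed
  have cft: "card (efib (G t0)) = card (fib (F (tgt CT t0)))" if t0: "t0 \<in> edges CT" for t0
  proof (rule bij_betw_same_card[of "tgt CT"])
    show "bij_betw (tgt CT) (efib (G t0)) (fib (F (tgt CT t0)))"
      unfolding bij_betw_def
    proof (intro conjI)
      show "inj_on (tgt CT) (efib (G t0))"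
      proof (rule inj_onI)
        fix t t' assume h: "t \<in> efib (G t0)" "t' \<in> efib (G t0)" "tgt CT t = tgt CT t'"
        hence sn: "snd t = snd t'" using labP by (metis (mono_tags, lifting) efib_def mem_Collect_eq)
        have "reduced N (fst t)" "reduced N (fst t')" using h srcT[of t] srcT[of t'] redT by (auto simp: efib_def)
        moreover have "mult_letter (fst t) (snd t, True) = mult_letter (fst t') (snd t, True)"
          using h sn by (simp add: CT_def)
        ultimately have "fst t = fst t'" by (rule mult_inj)
        thus "t = t'" using sn by (simp add: prod_eq_iff)
      qed
      show "tgt CT ` efib (G t0) = fib (F (tgt CT t0))"
      proof
        show "tgt CT ` efib (G t0) \<subseteq> fib (F (tgt CT t0))"
          using tgtP tgtT t0 by (auto simp: efib_def fib_def) (metis tgtP)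
      next
        show "fib (F (tgt CT t0)) \<subseteq> tgt CT ` efib (G t0)"
        proof
          fix x assume "x \<in> fib (F (tgt CT t0))"
          hence x: "x \<in> T" "F x = F (tgt CT t0)" by (auto simp: fib_def)
          have "G t0 \<in> inE P (F x)" using t0 x GP tgtP by (simp add: inE_def)
          then obtain t where "t \<in> inE CT x" "G t = G t0" using inP[OF x(1)] by auto
          thus "x \<in> tgt CT ` efib (G t0)" by (auto simp: inE_def efib_def) 
        qed
      qed
    qed
  qed
  have kconst: "card (fib (F x)) = card (fib (F []))" if "x \<in> T" for x
  proof -
    have "(adj CT)\<^sup>*\<^sup>* [] x" using reachT[OF that] by (simp add: reach_def)
    thus ?thesis
    proof (induction rule: rtranclp_induct)
      case base thus ?case by simp
    next
      case (step a b)
      from step(2) obtain t where t: "t \<in> edges CT"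
        "(src CT t = a \<and> tgt CT t = b) \<or> (src CT t = b \<and> tgt CT t = a)" unfolding adj_def by blast
      have "card (fib (F (fst t))) = card (fib (F (tgt CT t)))" using cfs[OF t(1)] cft[OF t(1)] by simp
      thus ?case using t step(3) by (auto simp: CT_def)
    qed
  qed
  define k where "k = card (fib (F []))"
  have cV: "card T = k * card (F ` T)"
    using card_fibers_const[OF finT, of F k] kconst unfolding k_def fib_def by auto
  have finE: "finite (edges CT)" using finT by (simp add: CT_def finite_cs_edges)
  have cE: "card (edges CT) = k * card (G ` edges CT)"
  proof (rule card_fibers_const[OF finE])
    fix t assume t: "t \<in> edges CT"
    have "card {y \<in> edges CT. G y = G t} = card (fib (F (fst t)))" using cfs[OF t] by (simp add: efib_def)
    thus "card {y \<in> edges CT. G y = G t} = k" using kconst[OF srcT[OF t]] by (simp add: k_def)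
  qed
  have tc: "card (edges CT) + 1 = card T" using tree_count[OF A(2)] by (simp add: CT_def)
  have k1: "k = 1" and cc: "card (F ` T) = card (G ` edges CT) + 1"
    using arith_k[of k "card (F ` T)" "card (G ` edges CT)"] cV cE tc by auto
  have injF: "inj_on F T"
  proof (rule inj_onI)
    fix x y assume h: "x \<in> T" "y \<in> T" "F x = F y"
    have "card (fib (F x)) = 1" using kconst[OF h(1)] k1 by (simp add: k_def)
    then obtain z where "fib (F x) = {z}" by (auto simp: card_Suc_eq)
    moreover have "x \<in> fib (F x)" "y \<in> fib (F x)" using h by (auto simp: fib_def)
    ultimately show "x = y" by auto
  qed
  have injG: "inj_on G (edges CT)"
  proof (rule inj_onI)
    fix t t' assume h: "t \<in> edges CT" "t' \<in> edges CT" "G t = G t'"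
    have "F (fst t) = F (fst t')" using h srcP by metis
    hence "fst t = fst t'" using injF srcT[OF h(1)] srcT[OF h(2)] by (auto dest: inj_onD)
    moreover have "snd t = snd t'" using h labP by metis
    ultimately show "t = t'" by (simp add: prod_eq_iff)
  qed
  have morG: "rmorph CT Gam F G"
    using morP VG EG unfolding rmorph_def by (auto simp: Gam_def CT_def)
  have iso: "riso CT Gam F G"
    unfolding riso_def using morG VG EG injF injG
    by (auto simp: bij_betw_def CT_def)
  have conn: "connected_graph Gam"
    unfolding connected_graph_def
  proof (intro conjI ballI)
    show "verts Gam \<noteq> {}" using VG nilT by auto
  next
    fix u w assume "u \<in> verts Gam" "w \<in> verts Gam"
    then obtain x y where xy: "x \<in> T" "y \<in> T" "u = F x" "w = F y" using VG by auto
    have "reach CT x y" using reach_trans[OF reach_sym[OF reachT[OF xy(1)]] reachT[OF xy(2)]] .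
    thus "reach Gam u w" using reach_morph[OF morG] xy by simp
  qed
  have contr: "contractible_graph Gam"
    unfolding contractible_graph_def using conn VG EG finT finE cc by simp
  show ?thesis using iso contr unfolding Gam_def P_def CT_def F_def G_def by simp
qed

end
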